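(* Let $\tilde\Theta\in\mathbb{R}^{p\times p}$ be a symmetric matrix with a positive diagonal, let $D=\mathrm{diag}\{d_j\}$ be a nonnegative diagonal matrix with $2D-D\tilde\Theta D\succeq 0$, and let $P_{\tilde X\mid X}$ be defined by \[\tilde X\mid X\sim\mathcal N_p\big((\mathbf I_p-D\tilde\Theta)X,\;2D-D\tilde\Theta D\big).\] Then for each $j=1,\dots,p$, $P_{\tilde X\mid X}$ is pairwise exchangeable with respect to the conditional distribution \[Q_j(\cdot\mid x_{-j})=\mathcal N\left(x_{-j}^\top\Big(\frac{-\tilde\Theta_{-j,j}}{\tilde\Theta_{jj}}\Big),\;\frac{1}{\tilde\Theta_{jj}}\right).\]
   Context: For $x\in\mathbb{R}^p$, $x_{-j}\in\mathbb{R}^{p-1}$ is $x$ with coordinate $j$ removed; $\tilde\Theta_{-j,j}\in\mathbb{R}^{p-1}$ is the $j$th column of $\tilde\Theta$ with entry $\tilde\Theta_{jj}$ removed. A conditional distribution $P_{\tilde X\mid X}(\cdot\mid x)$ on $\mathbb{R}^p$ is pairwise exchangeable with respect to $Q_j$ if for every distribution $D^{(j)}$ on $\mathbb{R}^p$ whose conditional distribution of $X_j$ given $X_{-j}$ is $Q_j$ (i.e. an arbitrary marginal for $X_{-j}$ times $Q_j$), drawing $X\sim D^{(j)}$ and $\tilde X\mid X\sim P_{\tilde X\mid X}(\cdot\mid X)$ gives $(X_j,\tilde X_j,X_{-j},\tilde X_{-j})\overset{d}{=}(\tilde X_j,X_j,X_{-j},\tilde X_{-j})$. Note $\tilde\Theta$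 need not be positive semidefinite, so the $Q_j$ need not be compatible with any joint distribution. *)

theory Defs
  imports "HOL-Probability.Probability"
begin

text \<open>Vectors in R^p are modelled as real^'n for a finite index type 'n (p = CARD('n)).\<close>

definition diagm :: "real^'n \<Rightarrow> real^'n^'n" where
  "diagm d = (\<chi> i k. if i = k then d $ i else 0)"

definition psd :: "real^'n^'n \<Rightarrow> bool" where
  "psd A \<longleftrightarrow> transpose A = A \<and> (\<forall>v. 0 \<le> v \<bullet> (A *v v))"

definition normal1 :: "real \<Rightarrow> real \<Rightarrow> real measure" where
  "normal1 m v = density lborel (normal_density m (sqrt v))"

definition std_gauss_vec :: "(real^'n) measure" where
  "std_gauss_vec = distr (PiM UNIV (\<lambda>i::'n. density lborel std_normal_density)) borel
      (\<lambda>z. vec_lambda z)"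

text \<open>Multivariate normal N_p(mu, S) (possibly degenerate): law of mu + A Z,
  Z standard Gaussian, A A^T = S.\<close>
definition gauss_vec :: "real^'n \<Rightarrow> real^'n^'n \<Rightarrow> (real^'n) measure" where
  "gauss_vec mu S =
     distr std_gauss_vec borel
       (\<lambda>z. mu + (SOME A :: real^'n^'n. A ** transpose A = S) *v z)"

definition vupd :: "real^'n \<Rightarrow> 'n \<Rightarrow> real \<Rightarrow> real^'n" where
  "vupd x j t = (\<chi> i. if i = j then t else x $ i)"

text \<open>Distribution D^(j): X_{-j} has the X_{-j}-marginal of mu (arbitrary), and
  X_j | X_{-j} ~ Q x (Q is required to depend only on x_{-j}).\<close>
definition complete_by :: "(real^'n) measure \<Rightarrow> (real^'n \<Rightarrow> real measure) \<Rightarrow> 'n \<Rightarrow> (real^'n) measure" where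
  "complete_by mu Q j = mu \<bind> (\<lambda>x. distr (Q x) borel (\<lambda>t. vupd x j t))"

definition swap_j :: "'n \<Rightarrow> (real^'n) \<times> (real^'n) \<Rightarrow> (real^'n) \<times> (real^'n)" where
  "swap_j j = (\<lambda>(x, y). (vupd x j (y $ j), vupd y j (x $ j)))"

definition pairwise_exchangeable ::
  "(real^'n \<Rightarrow> (real^'n) measure) \<Rightarrow> (real^'n \<Rightarrow> real measure) \<Rightarrow> 'n \<Rightarrow> bool" where
  "pairwise_exchangeable P Q j \<longleftrightarrow>
     (\<forall>mu. prob_space mu \<and> sets mu = sets (borel :: (real^'n) measure) \<longrightarrow>
        (let J = complete_by mu Q j \<bind> (\<lambda>x. distr (P x) borel (\<lambda>y. (x, y)))
         in distr J borel (swap_j j) = J))"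

definition Q_cond :: "real^'n^'n \<Rightarrow> 'n \<Rightarrow> real^'n \<Rightarrow> real measure" where
  "Q_cond Th j x = normal1 (\<Sum>k\<in>UNIV - {j}. x $ k * (- Th $ k $ j / Th $ j $ j)) (1 / Th $ j $ j)"

definition knock_kernel :: "real^'n^'n \<Rightarrow> real^'n \<Rightarrow> real^'n \<Rightarrow> (real^'n) measure" where
  "knock_kernel Th d x =
     gauss_vec ((mat 1 - diagm d ** Th) *v x) (2 *\<^sub>R diagm d - diagm d ** Th ** diagm d)"

end

theory Submission
  imports Defs "HOL-Analysis.Change_Of_Vars" "HOL-Library.Numeral_Type"
begin

lemma sum_delta_r: "(\<Sum>j\<in>UNIV. (f::'n::finite\<Rightarrow>real) j * (if j = i then (1::real) else 0)) = f i"
proof -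
  have eq: "(\<lambda>j. f j * (if j = i then (1::real) else 0)) = (\<lambda>j. if j = i then f j else 0)" by auto
  show ?thesis by (subst eq) simp
qed

lemma qf_expand:
  fixes S :: "real^'n^'n"
  assumes sym: "transpose S = S"
  shows "(v + t *\<^sub>R axis i 1) \<bullet> (S *v (v + t *\<^sub>R axis i 1))
     = v \<bullet> (S *v v) + 2 * t * (S *v v) $ i + t^2 * S $ i $ i"
proof -
  have e1: "axis i 1 \<bullet> (S *v v) = (S *v v) $ i" by (simp add: inner_axis')
  have e2: "v \<bullet> (S *v axis i 1) = (S *v v) $ i"
  proof -
    have "v \<bullet> (S *v axis i 1) = (v v* S) \<bullet> axis i 1" by (simp add: dot_lmul_matrix)
    also have "v v* S = transpose S *v v" by simp
    finally show ?thesis by (simp add: sym inner_axis)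
  qed
  have e3: "axis i 1 \<bullet> (S *v axis i 1) = S $ i $ i"
    by (subst inner_axis') (simp add: matrix_vector_mult_def axis_def sum_delta_r)
  have "S *v (v + t *\<^sub>R axis i 1) = S *v v + t *\<^sub>R (S *v axis i 1)"
    by (simp add: matrix_vector_right_distrib matrix_vector_mult_scaleR)
  then show ?thesis
    by (simp add: inner_add_left inner_add_right e1 e2 e3 power2_eq_square algebra_simps)
qed

lemma axis_qf: "axis i 1 \<bullet> ((S::real^'n^'n) *v axis i 1) = S $ i $ i"
    by (subst inner_axis') (simp add: matrix_vector_mult_def axis_def sum_delta_r)

lemma psd_cs:
  fixes S :: "real^'n^'n"
  assumes "psd S"
  shows "((S *v v) $ i)^2 \<le> S $ i $ i * (v \<bullet> (S *v v))"
proof -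
  have sym: "transpose S = S" and nn: "\<And>w. 0 \<le> w \<bullet> (S *v w)" using assms by (auto simp: psd_def)
  define q where "q = v \<bullet> (S *v v)"
  define b where "b = (S *v v) $ i"
  define c where "c = S $ i $ i"
  have key: "\<And>t. 0 \<le> q + 2 * t * b + t^2 * c"
    using nn qf_expand[OF sym] unfolding q_def b_def c_def by metis
  have c0: "0 \<le> c" using nn[of "axis i 1"] axis_qf[of i S] unfolding c_def by simp
  show ?thesis
  proof (cases "c = 0")
    case True
    have "b = 0"
    proof (rule ccontr)
      assume "b \<noteq> 0"
      have "0 \<le> q + 2 * (-(q+1)/(2*b)) * b + (-(q+1)/(2*b))^2 * c" by (rule key)
      also have "\<dots> = -1" using \<open>b \<noteq> 0\<close> True by (simp add: field_simps)
      finally show False by simp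
    qed
    then show ?thesis using True by (simp add: b_def c_def)
  next
    case False
    then have cp: "c > 0" using c0 by simp
    have "0 \<le> q + 2 * (-b/c) * b + (-b/c)^2 * c" by (rule key)
    also have "\<dots> = q - b^2 / c" using cp by (simp add: field_simps power2_eq_square)
    finally have "b^2 / c \<le> q" by simp
    then have "b^2 \<le> c * q" using cp by (simp add: divide_le_eq mult.commute)
    then show ?thesis by (simp add: b_def c_def q_def)
  qed
qed

lemma mv_axis: "((S::real^'n^'n) *v axis k 1) $ i = S $ i $ k"
  by (simp add: matrix_vector_mult_def axis_def sum_delta_r)

lemma psd_sym: "psd S \<Longrightarrow> (S::real^'n^'n) $ k $ i = S $ i $ k"
proof -
  assume "psd S"
  then have "transpose S = S" by (simp add: psd_def)
  moreover have "transpose S $ k $ i = S $ i $ k" by (simp add: transpose_def)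
  ultimately show ?thesis by simp
qed

lemma psd_diag_nn: "psd S \<Longrightarrow> 0 \<le> (S::real^'n^'n) $ i $ i"
  using axis_qf[of i S] unfolding psd_def by metis

lemma psd_zero_row:
  assumes "psd (S::real^'n^'n)" "S $ i $ i = 0"
  shows "S $ i $ k = 0"
  using psd_cs[OF assms(1), of "axis k 1" i] assms(2) by (simp add: mv_axis)

lemma outer_qf: "v \<bullet> ((\<chi> r k. (a::real^'n) $ r * a $ k) *v v) = (a \<bullet> v)^2"
proof -
  have "v \<bullet> ((\<chi> r k. a $ r * a $ k) *v v) = (\<Sum>r\<in>UNIV. v $ r * (\<Sum>k\<in>UNIV. a $ r * a $ k * v $ k))"
    by (simp add: inner_vec_def matrix_vector_mult_def)
  also have "\<dots> = (\<Sum>r\<in>UNIV. \<Sum>k\<in>UNIV. (v $ r * a $ r) * (a $ k * v $ k))"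
    by (simp add: sum_distrib_left mult_ac)
  also have "\<dots> = (\<Sum>r\<in>UNIV. v $ r * a $ r) * (\<Sum>k\<in>UNIV. a $ k * v $ k)"
    by (simp add: sum_product)
  also have "\<dots> = (a \<bullet> v)^2"
    by (simp add: inner_vec_def power2_eq_square mult.commute)
  finally show ?thesis .
qed

lemma sqrt_ex_aux:
  fixes I :: "'n::finite set"
  assumes "finite I"
  shows "\<forall>S::real^'n^'n. psd S \<and> (\<forall>i k. i \<notin> I \<or> k \<notin> I \<longrightarrow> S$i$k = 0) \<longrightarrow>
           (\<exists>A::real^'n^'n. A ** transpose A = S \<and> (\<forall>r k. k \<notin> I \<longrightarrow> A$r$k = 0))"
  using assms
proof (induction I rule: finite_induct)
  case empty
  show ?case
  proof (intro allI impI)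
    fix S :: "real^'n^'n" assume "psd S \<and> (\<forall>i k. i \<notin> {} \<or> k \<notin> {} \<longrightarrow> S$i$k = 0)"
    then have "S = 0" by (simp add: vec_eq_iff)
    then show "\<exists>A::real^'n^'n. A ** transpose A = S \<and> (\<forall>r k. k \<notin> {} \<longrightarrow> A$r$k = 0)"
      by (intro exI[of _ 0]) (simp add: vec_eq_iff matrix_matrix_mult_def)
  qed
next
  case (insert i I)
  show ?case
  proof (intro allI impI)
    fix S :: "real^'n^'n"
    assume H: "psd S \<and> (\<forall>r k. r \<notin> insert i I \<or> k \<notin> insert i I \<longrightarrow> S$r$k = 0)"
    then have ps: "psd S" and sup: "\<And>r k. r \<notin> insert i I \<or> k \<notin> insert i I \<Longrightarrow> S$r$k = 0" by auto
    show "\<exists>A::real^'n^'n. A ** transpose A = S \<and> (\<forall>r k. k \<notin> insert i I \<longrightarrow> A$r$k = 0)"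
    proof (cases "S $ i $ i = 0")
      case True
      have "\<forall>r k. r \<notin> I \<or> k \<notin> I \<longrightarrow> S$r$k = 0"
      proof (intro allI impI)
        fix r k assume rk: "r \<notin> I \<or> k \<notin> I"
        show "S $ r $ k = 0"
        proof (cases "r = i \<or> k = i")
          case True
          then show ?thesis using psd_zero_row[OF ps \<open>S $ i $ i = 0\<close>] psd_sym[OF ps, of r k] by auto
        next
          case False
          then show ?thesis using sup[of r k] rk by auto
        qed
      qed
      with insert.IH ps obtain A :: "real^'n^'n" where "A ** transpose A = S" "\<forall>r k. k \<notin> I \<longrightarrow> A$r$k = 0"
        by blast
      then show ?thesis by auto
    next
      case False
      define c where "c = S $ i $ i"
      have cp: "c > 0" using False psd_diag_nn[OF ps, of i] unfolding c_def by simp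
      define a :: "real^'n" where "a = (\<chi> r. S $ r $ i / sqrt c)"
      define S' :: "real^'n^'n" where "S' = S - (\<chi> r k. a $ r * a $ k)"
      have aa: "a $ r * a $ k = S $ r $ i * S $ k $ i / c" for r k
        using cp by (simp add: a_def real_sqrt_mult[symmetric] power2_eq_square[symmetric])
      have S'c: "S' $ r $ k = S $ r $ k - S $ r $ i * S $ k $ i / c" for r k
        by (simp add: S'_def aa)
      have av: "a \<bullet> v = (S *v v) $ i / sqrt c" for v
        by (simp add: a_def inner_vec_def matrix_vector_mult_def sum_divide_distrib psd_sym[OF ps, of _ i] mult.commute)
      have "psd S'"
        unfolding psd_def
      proof (intro conjI allI)
        have "S' $ k $ r = S' $ r $ k" for r k
          using psd_sym[OF ps, of k r] by (simp add: S'c mult.commute)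
        then show "transpose S' = S'"
          by (simp add: vec_eq_iff transpose_def)
      next
        fix v :: "real^'n"
        have "v \<bullet> (S' *v v) = v \<bullet> (S *v v) - (a \<bullet> v)^2"
          by (simp add: S'_def matrix_vector_mult_diff_rdistrib inner_diff_right outer_qf)
        also have "(a \<bullet> v)^2 = ((S *v v) $ i)^2 / c"
          using cp by (simp add: av power_divide)
        finally have eq: "v \<bullet> (S' *v v) = v \<bullet> (S *v v) - ((S *v v) $ i)^2 / c" .
        have "((S *v v) $ i)^2 \<le> c * (v \<bullet> (S *v v))" using psd_cs[OF ps] unfolding c_def by blast
        then have "((S *v v) $ i)^2 / c \<le> v \<bullet> (S *v v)" using cp by (simp add: divide_le_eq mult.commute)
        then show "0 \<le> v \<bullet> (S' *v v)" using eq by simp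
      qed
      moreover have "\<forall>r k. r \<notin> I \<or> k \<notin> I \<longrightarrow> S'$r$k = 0"
      proof (intro allI impI)
        fix r k assume rk: "r \<notin> I \<or> k \<notin> I"
        show "S' $ r $ k = 0"
        proof (cases "r = i \<or> k = i")
          case True
          then show ?thesis
          proof
            assume "r = i"
            then show ?thesis using cp psd_sym[OF ps, of k i] by (simp add: S'c c_def)
          next
            assume "k = i"
            then show ?thesis using cp by (simp add: S'c c_def)
          qed
        next
          case False
          then have "r \<notin> insert i I \<or> k \<notin> insert i I" using rk by auto
          then show ?thesis using sup[of r k] sup[of r i] sup[of k i] by (auto simp: S'c)
        qed
      qed
      ultimately obtain A' :: "real^'n^'n" where A': "A' ** transpose A' = S'" "\<forall>r k. k \<notin> I \<longrightarrow> A'$r$k = 0"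
        using insert.IH by blast
      define A :: "real^'n^'n" where "A = (\<chi> r k. if k = i then a $ r else A' $ r $ k)"
      have A'i: "A' $ r $ i = 0" for r using A'(2) insert.hyps(2) by auto
      have "(A ** transpose A) $ r $ t = S $ r $ t" for r t
      proof -
        have "(A ** transpose A) $ r $ t = (\<Sum>k\<in>UNIV. (if k = i then a $ r * a $ t else 0) + A' $ r $ k * A' $ t $ k)"
          by (auto simp: matrix_matrix_mult_def transpose_def A_def A'i intro!: sum.cong)
        also have "\<dots> = a $ r * a $ t + S' $ r $ t"
          by (simp add: sum.distrib A'(1)[symmetric] matrix_matrix_mult_def transpose_def)
        also have "\<dots> = S $ r $ t" by (simp add: S'_def)
        finally show ?thesis .
      qed
      then have "A ** transpose A = S" by (simp add: vec_eq_iff)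
      moreover have "\<forall>r k. k \<notin> insert i I \<longrightarrow> A$r$k = 0" using A'(2) by (auto simp: A_def)
      ultimately show ?thesis by blast
    qed
  qed
qed

lemma psd_sqrt: "psd (S::real^'n^'n) \<Longrightarrow> \<exists>A::real^'n^'n. A ** transpose A = S"
  using sqrt_ex_aux[of "UNIV::'n set"] by auto

abbreviation N01 :: "real measure" where "N01 \<equiv> density lborel std_normal_density"

lemma prob_N01: "prob_space N01" by (rule prob_space_normal_density) simp

interpretation N01P: product_sigma_finite "\<lambda>_::'k. N01"
  unfolding product_sigma_finite_def
  using prob_N01 prob_space_imp_sigma_finite by blast

lemma sum_delta_l: "(\<Sum>j\<in>UNIV. (f::'n::finite\<Rightarrow>real) j * (if i = j then (1::real) else 0)) = f i"
proof -
  have eq: "(\<lambda>j. f j * (if i = j then (1::real) else 0)) = (\<lambda>j. if j = i then f j else 0)" by auto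
  show ?thesis by (subst eq) simp
qed

lemma vec_lambda_sum: "vec_lambda f = (\<Sum>i\<in>UNIV. f i *\<^sub>R axis i (1::real))"
  by (simp add: vec_eq_iff sum_component axis_def sum_delta_l)

lemma measurable_vec_lambda:
  assumes "\<And>i. sets (M i) = sets (borel::real measure)"
  shows "(\<lambda>f. vec_lambda f :: real^'k) \<in> measurable (PiM UNIV M) borel"
proof -
  have "(\<lambda>f. \<Sum>i\<in>UNIV. f i *\<^sub>R axis i (1::real) :: real^'k) \<in> borel_measurable (PiM UNIV M)"
  proof (intro borel_measurable_sum borel_measurable_scaleR borel_measurable_const)
    fix i :: 'k
    have "(\<lambda>f. f i) \<in> measurable (PiM UNIV M) (M i)" by (rule measurable_component_singleton) simp
    then show "(\<lambda>f. f i) \<in> borel_measurable (PiM UNIV M)"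
      using assms measurable_cong_sets by blast
  qed
  then show ?thesis by (simp add: vec_lambda_sum[symmetric])
qed

lemma measurable_vec_nth[measurable]: "(\<lambda>x::real^'k. x $ i) \<in> borel_measurable borel"
  by (intro borel_measurable_continuous_onI linear_continuous_on bounded_linear_vec_nth)

lemma measurable_vec_nth_fun:
  assumes "\<And>i. sets (M i) = sets (borel::real measure)"
  shows "(\<lambda>x::real^'k. \<lambda>i. x $ i) \<in> measurable borel (PiM UNIV M)"
proof (rule measurable_PiM_single')
  fix i
  show "(\<lambda>\<omega>::real^'k. \<omega> $ i) \<in> borel \<rightarrow>\<^sub>M M i"
  proof -
    have eq: "measurable borel (M i) = measurable borel borel" by (rule measurable_cong_sets[OF refl assms[of i]])
    show ?thesis by (subst eq) (rule measurable_vec_nth)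
  qed
next
  have "\<And>i. space (M i) = UNIV" using sets_eq_imp_space_eq[OF assms] by simp
  then show "(\<lambda>x::real^'k. \<lambda>i. x $ i) \<in> space borel \<rightarrow> (\<Pi>\<^sub>E i\<in>UNIV. space (M i))" by simp
qed

lemma vec_nth_pre: "A \<in> sets borel \<Longrightarrow> (\<lambda>x::real^'k. x$i) -` A \<in> sets borel"
  using measurable_sets[OF measurable_vec_nth[of i], of A] by simp

lemma sets_N01[simp]: "sets N01 = sets borel" by simp

lemma G_prod:
  assumes A: "\<And>i. A i \<in> sets borel"
  shows "emeasure (std_gauss_vec :: (real^'k) measure) {x. \<forall>i. x $ i \<in> A i} = (\<Prod>i\<in>UNIV. emeasure N01 (A i))"
proof -
  have m: "(\<lambda>f. vec_lambda f :: real^'k) \<in> measurable (PiM UNIV (\<lambda>_. N01)) borel"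
    by (rule measurable_vec_lambda) simp
  have s: "{x::real^'k. \<forall>i. x $ i \<in> A i} \<in> sets borel"
  proof -
    have "{x::real^'k. \<forall>i. x $ i \<in> A i} = (\<Inter>i. (\<lambda>x. x $ i) -` A i \<inter> space borel)" by auto
    also have "\<dots> \<in> sets borel" using A by (intro sets.countable_INT) (auto intro: vec_nth_pre)
    finally show ?thesis .
  qed
  have "emeasure (std_gauss_vec :: (real^'k) measure) {x. \<forall>i. x $ i \<in> A i}
        = emeasure (PiM UNIV (\<lambda>_. N01)) ((\<lambda>f. vec_lambda f :: real^'k) -` {x. \<forall>i. x $ i \<in> A i} \<inter> space (PiM UNIV (\<lambda>_. N01)))"
    unfolding std_gauss_vec_def by (rule emeasure_distr[OF m s])
  also have "(\<lambda>f. vec_lambda f :: real^'k) -` {x. \<forall>i. x $ i \<in> A i} \<inter> space (PiM UNIV (\<lambda>_. N01)) = PiE UNIV A"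
    by (auto simp: space_PiM)
  also have "emeasure (PiM UNIV (\<lambda>_. N01)) (PiE UNIV A) = (\<Prod>i\<in>UNIV. emeasure N01 (A i))"
    using A by (intro N01P.emeasure_PiM) auto
  finally show ?thesis .
qed

lemma G_eqI:
  fixes M :: "(real^'k) measure"
  assumes sM: "sets M = sets borel"
  assumes eq: "\<And>A. (\<And>i. A i \<in> sets borel) \<Longrightarrow> emeasure M {x. \<forall>i. x $ i \<in> A i} = (\<Prod>i\<in>UNIV. emeasure N01 (A i))"
  shows "M = std_gauss_vec"
proof -
  let ?P = "PiM UNIV (\<lambda>_::'k. N01)"
  have mn: "(\<lambda>x::real^'k. \<lambda>i. x $ i) \<in> measurable M ?P"
    using measurable_vec_nth_fun[of "\<lambda>_. N01"] measurable_cong_sets[OF sM refl] by auto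
  have ml: "(\<lambda>f. vec_lambda f :: real^'k) \<in> measurable ?P borel"
    by (rule measurable_vec_lambda) simp
  have spM: "space M = UNIV" using sets_eq_imp_space_eq[OF sM] by simp
  have D: "distr M ?P (\<lambda>x i. x $ i) = ?P"
  proof (rule N01P.PiM_eqI)
    fix A :: "'k \<Rightarrow> real set" assume A: "\<And>i. i \<in> UNIV \<Longrightarrow> A i \<in> sets N01"
    have "emeasure (distr M ?P (\<lambda>x i. x $ i)) (PiE UNIV A) = emeasure M ((\<lambda>x i. x $ i) -` PiE UNIV A \<inter> space M)"
      using A by (intro emeasure_distr[OF mn]) (auto intro!: sets_PiM_I_finite)
    also have "(\<lambda>x i. x $ i) -` PiE UNIV A \<inter> space M = {x. \<forall>i. x $ i \<in> A i}"
      by (auto simp: spM)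
    also have "emeasure M \<dots> = (\<Prod>i\<in>UNIV. emeasure N01 (A i))" using A by (intro eq) auto
    finally show "emeasure (distr M ?P (\<lambda>x i. x $ i)) (PiE UNIV A) = (\<Prod>i\<in>UNIV. emeasure N01 (A i))" .
  qed auto
  have "M = distr M borel (\<lambda>x. x)" using distr_id2[OF sM[symmetric]] by simp
  also have "\<dots> = distr M borel ((\<lambda>f. vec_lambda f) \<circ> (\<lambda>x i. x $ i))" by (simp add: comp_def)
  also have "\<dots> = distr (distr M ?P (\<lambda>x i. x $ i)) borel (\<lambda>f. vec_lambda f)"
    by (rule distr_distr[OF ml mn, symmetric])
  also have "\<dots> = std_gauss_vec" unfolding D std_gauss_vec_def by simp
  finally show ?thesis .
qed

lemma Basis_rvec: "(Basis :: (real^'k) set) = range (\<lambda>i. axis i 1)"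
  by (auto simp: Basis_vec_def)

lemma prodset_borel: "(\<And>i. A i \<in> sets borel) \<Longrightarrow> {x::real^'k. \<forall>i. x $ i \<in> A i} \<in> sets borel"
proof -
  assume A: "\<And>i. A i \<in> sets borel"
  have "{x::real^'k. \<forall>i. x $ i \<in> A i} = (\<Inter>i. (\<lambda>x. x $ i) -` A i)" by auto
  also have "\<dots> \<in> sets borel" using A by (intro sets.countable_INT) (auto intro: vec_nth_pre)
  finally show ?thesis .
qed

definition gdens :: "real^'k \<Rightarrow> real" where
  "gdens x = (\<Prod>i\<in>UNIV. std_normal_density (x $ i))"

lemma gdens_meas[measurable]: "gdens \<in> borel_measurable borel"
  unfolding gdens_def by measurable

lemma Gdens: "(std_gauss_vec :: (real^'k) measure) = density lborel (\<lambda>x. ennreal (gdens x))"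
proof (rule G_eqI[symmetric])
  show "sets (density lborel (\<lambda>x. ennreal (gdens x)) :: (real^'k) measure) = sets borel" by simp
  fix A :: "'k \<Rightarrow> real set" assume A: "\<And>i. A i \<in> sets borel"
  define f :: "real^'k \<Rightarrow> real \<Rightarrow> ennreal" where
    "f b t = ennreal (std_normal_density t) * indicator (A (inv (\<lambda>i. axis i (1::real)) b)) t" for b t
  have inj: "inj (\<lambda>i::'k. axis i (1::real))" by (auto simp: inj_on_def axis_eq_axis)
  have finv: "f (axis i 1) t = ennreal (std_normal_density t) * indicator (A i) t" for i t
    using inv_f_f[OF inj, of i] by (simp add: f_def)
  have "emeasure (density lborel (\<lambda>x. ennreal (gdens x))) {x::real^'k. \<forall>i. x $ i \<in> A i}
      = (\<integral>\<^sup>+x. ennreal (gdens x) * indicator {x::real^'k. \<forall>i. x $ i \<in> A i} x \<partial>lborel)"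
    using prodset_borel[OF A] by (intro emeasure_density) auto
  also have "\<dots> = (\<integral>\<^sup>+x. (\<Prod>b\<in>Basis. f b (x \<bullet> b)) \<partial>lborel)"
  proof (intro nn_integral_cong)
    fix x :: "real^'k"
    have "(\<Prod>b\<in>Basis. f b (x \<bullet> b)) = (\<Prod>i\<in>UNIV. f (axis i 1) (x \<bullet> axis i 1))"
      unfolding Basis_rvec by (subst prod.reindex[OF inj]) (simp add: comp_def)
    also have "\<dots> = (\<Prod>i\<in>UNIV. ennreal (std_normal_density (x $ i)) * indicator (A i) (x $ i))"
      by (simp add: finv inner_axis)
    also have "\<dots> = (\<Prod>i\<in>UNIV. ennreal (std_normal_density (x $ i))) * (\<Prod>i\<in>UNIV. indicator (A i) (x $ i))"
      by (rule prod.distrib)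
    also have "(\<Prod>i\<in>UNIV. ennreal (std_normal_density (x $ i))) = ennreal (gdens x)"
      unfolding gdens_def by (rule prod_ennreal) simp
    also have "(\<Prod>i\<in>UNIV. indicator (A i) (x $ i) :: ennreal) = indicator {x::real^'k. \<forall>i. x $ i \<in> A i} x"
      by (auto simp: indicator_def prod_zero_iff)
    finally show "ennreal (gdens x) * indicator {x::real^'k. \<forall>i. x $ i \<in> A i} x = (\<Prod>b\<in>Basis. f b (x \<bullet> b))" ..
  qed
  also have "\<dots> = (\<Prod>b\<in>Basis. (\<integral>\<^sup>+t. f b t \<partial>lborel))"
  proof (rule nn_integral_lborel_prod)
    fix b :: "real^'k" assume "b \<in> Basis"
    have "A (inv (\<lambda>i. axis i (1::real)) b) \<in> sets borel" by (rule A)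
    then show "f b \<in> borel_measurable borel" unfolding f_def by measurable
  qed simp
  also have "\<dots> = (\<Prod>i\<in>UNIV. (\<integral>\<^sup>+t. f (axis i 1) t \<partial>lborel))"
    unfolding Basis_rvec by (subst prod.reindex[OF inj]) (simp add: comp_def)
  also have "\<dots> = (\<Prod>i\<in>UNIV. emeasure N01 (A i))"
    using A by (simp add: finv emeasure_density)
  finally show "emeasure (density lborel (\<lambda>x. ennreal (gdens x))) {x::real^'k. \<forall>i. x $ i \<in> A i} = (\<Prod>i\<in>UNIV. emeasure N01 (A i))" .
qed

lemma gdens_alt: "gdens (x::real^'k) = (1 / sqrt (2 * pi)) ^ CARD('k) * exp (- (x \<bullet> x) / 2)"
proof -
  have "gdens x = (\<Prod>i\<in>UNIV. (1 / sqrt (2 * pi)) * exp (- (x $ i)\<^sup>2 / 2))"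
    by (simp add: gdens_def normal_density_def)
  also have "\<dots> = (1 / sqrt (2 * pi)) ^ CARD('k) * (\<Prod>i\<in>UNIV. exp (- (x $ i)\<^sup>2 / 2))"
    by (simp only: prod.distrib prod_constant)
  also have "(\<Prod>i\<in>UNIV. exp (- (x $ i)\<^sup>2 / 2)) = exp (\<Sum>i\<in>UNIV. - (x $ i)\<^sup>2 / 2)"
    by (simp add: exp_sum)
  also have "(\<Sum>i\<in>UNIV. - (x $ i)\<^sup>2 / 2) = - (x \<bullet> x) / 2"
    by (simp add: inner_vec_def power2_eq_square sum_divide_distrib[symmetric] sum_negf)
  finally show ?thesis .
qed

lemma linear_meas:
  fixes T :: "'a::euclidean_space \<Rightarrow> 'c::euclidean_space"
  assumes lin: "linear T"
  shows "T \<in> measurable lborel borel"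
proof -
  have "continuous_on UNIV T"
    by (rule linear_continuous_on) (use lin in \<open>simp add: linear_conv_bounded_linear\<close>)
  then have "T \<in> measurable borel borel" by (rule borel_measurable_continuous_onI)
  moreover have "measurable lborel (borel::'c measure) = measurable borel borel"
    by (rule measurable_cong_sets) simp_all
  ultimately show ?thesis by simp
qed

lemma lborel_orth:
  fixes T :: "real^'b::{finite,wellorder} \<Rightarrow> real^'b::_"
  assumes T: "orthogonal_transformation T"
  shows "distr lborel borel T = lborel"
proof (rule lborel_eqI[symmetric])
  show "sets (distr lborel borel T) = sets borel" by simp
  have lin: "linear T" using T by (rule orthogonal_transformation_linear)
  have Tm: "T \<in> measurable lborel borel"
    by (rule linear_meas[OF lin])
  define U where "U = inv T"
  have U: "orthogonal_transformation U" unfolding U_def by (rule orthogonal_transformation_inv[OF T])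
  have UT: "U (T x) = x" for x unfolding U_def using orthogonal_transformation_inj[OF T] by (simp add: inv_f_f)
  have TU: "T (U x) = x" for x unfolding U_def using orthogonal_transformation_surj[OF T] by (simp add: surj_f_inv_f)
  fix l u :: "real^'b::_" assume lu: "\<And>b. b \<in> Basis \<Longrightarrow> l \<bullet> b \<le> u \<bullet> b"
  have pre: "T -` box l u = U ` box l u"
    by (auto simp: image_iff UT TU) (metis UT)
  have bs: "box l u \<in> sets borel" by simp
  have Ub: "U ` box l u \<in> sets borel" using measurable_sets[OF Tm bs] pre by simp
  have bdd: "bounded (U ` box l u)"
    using orthogonal_transformation_linear[OF U] by (intro bounded_linear_image bounded_box) (simp add: linear_conv_bounded_linear[symmetric])
  have "emeasure (distr lborel borel T) (box l u) = emeasure lborel (U ` box l u)"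
    using emeasure_distr[OF Tm bs] pre by simp
  also have "\<dots> = ennreal (measure lborel (U ` box l u))"
    using emeasure_bounded_finite[OF bdd] by (intro emeasure_eq_ennreal_measure) simp
  also have "measure lborel (U ` box l u) = measure lebesgue (U ` box l u)"
    using Ub by simp
  also have "\<dots> = measure lebesgue (box l u)"
    using U by (rule measure_orthogonal_image) simp
  also have "\<dots> = measure lborel (box l u)" by simp
  also have "ennreal \<dots> = emeasure lborel (box l u)"
    using emeasure_bounded_finite[of "box l u"] by (intro emeasure_eq_ennreal_measure[symmetric]) simp
  also have "\<dots> = (\<Prod>b\<in>Basis. (u - l) \<bullet> b)" using lu by simp
  finally show "emeasure (distr lborel borel T) (box l u) = (\<Prod>b\<in>Basis. (u - l) \<bullet> b)" .
qed

lemma G_orth: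
  fixes T :: "real^'b::{finite,wellorder} \<Rightarrow> real^'b::_"
  assumes T: "orthogonal_transformation T"
  shows "distr std_gauss_vec borel T = std_gauss_vec"
proof -
  have lin: "linear T" using T by (rule orthogonal_transformation_linear)
  have Tm: "T \<in> measurable lborel borel"
    by (rule linear_meas[OF lin])
  have inv: "gdens (T x) = gdens x" for x
  proof -
    have "T x \<bullet> T x = x \<bullet> x" using T by (simp add: orthogonal_transformation_def)
    then show ?thesis by (simp add: gdens_alt)
  qed
  have "distr std_gauss_vec borel T = distr (density lborel (\<lambda>x. ennreal (gdens (T x)))) borel T"
    by (simp add: Gdens inv)
  also have "\<dots> = density (distr lborel borel T) (\<lambda>x. ennreal (gdens x))"
    by (rule density_distr[symmetric, OF _ Tm]) simp
  also have "\<dots> = std_gauss_vec" by (simp add: lborel_orth[OF T] Gdens)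
  finally show ?thesis .
qed

lemma linear_meas2:
  fixes T :: "'a::euclidean_space \<Rightarrow> 'c::euclidean_space"
  assumes lin: "linear T"
  shows "T \<in> borel_measurable borel"
proof -
  have "continuous_on UNIV T"
    by (rule linear_continuous_on) (use lin in \<open>simp add: linear_conv_bounded_linear\<close>)
  then show ?thesis by (rule borel_measurable_continuous_onI)
qed

lemma prob_G: "prob_space (std_gauss_vec :: (real^'k) measure)"
proof -
  have "prob_space (PiM UNIV (\<lambda>_::'k. N01))" by (rule prob_space_PiM) (rule prob_N01)
  moreover have "(\<lambda>f. vec_lambda f :: real^'k) \<in> measurable (PiM UNIV (\<lambda>_. N01)) borel"
    by (rule measurable_vec_lambda) simp
  ultimately show ?thesis unfolding std_gauss_vec_def by (rule prob_space.prob_space_distr)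
qed

lemma sets_G[simp]: "sets (std_gauss_vec :: (real^'k) measure) = sets borel"
  by (simp add: std_gauss_vec_def)

lemma G_eqI_scaled:
  fixes M :: "(real^'k) measure"
  assumes sM: "sets M = sets borel" and ct: "c < top"
  assumes eq: "\<And>A. (\<And>i. A i \<in> sets borel) \<Longrightarrow> emeasure M {x. \<forall>i. x $ i \<in> A i} = c * (\<Prod>i\<in>UNIV. emeasure N01 (A i))"
  assumes B: "B \<in> sets borel"
  shows "emeasure M B = c * emeasure std_gauss_vec B"
proof (cases "c = 0")
  case True
  have spM: "space M = UNIV" using sets_eq_imp_space_eq[OF sM] by simp
  have "emeasure M {x. \<forall>i. x $ i \<in> (UNIV::real set)} = 0" using eq[of "\<lambda>_. UNIV"] True by simp
  then have "emeasure M UNIV = 0" by simp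
  moreover have "emeasure M B \<le> emeasure M UNIV"
    using B sM by (intro emeasure_mono) auto
  ultimately show ?thesis using True by simp
next
  case False
  obtain r where r: "c = ennreal r" "r > 0"
    using ct False by (cases c rule: ennreal_cases) (auto simp: less_le)
  have ic: "inverse c * c = 1" using r by (simp add: inverse_ennreal ennreal_mult[symmetric])
  define M' where "M' = density M (\<lambda>_. inverse c)"
  have "M' = std_gauss_vec"
  proof (rule G_eqI)
    show "sets M' = sets borel" using sM by (simp add: M'_def)
    fix A :: "'k \<Rightarrow> real set" assume A: "\<And>i. A i \<in> sets borel"
    have "emeasure M' {x. \<forall>i. x $ i \<in> A i} = inverse c * emeasure M {x. \<forall>i. x $ i \<in> A i}"
      unfolding M'_def using prodset_borel[OF A] sM by (intro emeasure_density_const) simp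
    also have "\<dots> = (\<Prod>i\<in>UNIV. emeasure N01 (A i))"
      using eq[OF A] ic by (simp add: mult.assoc[symmetric])
    finally show "emeasure M' {x. \<forall>i. x $ i \<in> A i} = (\<Prod>i\<in>UNIV. emeasure N01 (A i))" .
  qed
  then have "emeasure std_gauss_vec B = inverse c * emeasure M B"
    unfolding M'_def[symmetric] using B sM by (metis M'_def emeasure_density_const)
  then have "c * emeasure std_gauss_vec B = (c * inverse c) * emeasure M B" by (simp add: mult.assoc)
  also have "c * inverse c = 1" using ic by (simp add: mult.commute)
  finally show ?thesis by simp
qed

lemma G_split:
  fixes a :: "'b::finite" and \<iota> :: "'k::finite \<Rightarrow> 'b"
  assumes inj: "inj \<iota>" and a: "a \<notin> range \<iota>"
  shows "distr (std_gauss_vec :: (real^'b) measure) borel (\<lambda>y. (y $ a, \<chi> i. y $ \<iota> i))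
       = N01 \<Otimes>\<^sub>M (std_gauss_vec :: (real^'k) measure)"
proof -
  define proj :: "real^'b \<Rightarrow> real^'k" where "proj y = (\<chi> i. y $ \<iota> i)" for y
  have linp: "linear proj" unfolding proj_def by (intro linearI) (simp_all add: vec_eq_iff)
  have mp[measurable]: "proj \<in> borel_measurable borel" by (rule linear_meas2[OF linp])
  have mpi: "(\<lambda>y::real^'b. (y $ a, \<chi> i. y $ \<iota> i)) \<in> measurable std_gauss_vec borel"
  proof -
    have "(\<lambda>y::real^'b. (y $ a, proj y)) \<in> measurable borel (borel \<Otimes>\<^sub>M borel)" by measurable
    then show ?thesis by (simp add: proj_def borel_prod measurable_cong_sets[OF sets_G])
  qed
  show ?thesis
  proof (rule pair_measure_eqI[symmetric])
    show "sigma_finite_measure N01" using prob_N01 prob_space_imp_sigma_finite by blast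
    show "sigma_finite_measure (std_gauss_vec :: (real^'k) measure)" using prob_G prob_space_imp_sigma_finite by blast
    show "sets (N01 \<Otimes>\<^sub>M (std_gauss_vec :: (real^'k) measure)) = sets (distr (std_gauss_vec :: (real^'b) measure) borel (\<lambda>y. (y $ a, \<chi> i. y $ \<iota> i)))"
    proof -
      have e1: "sets (N01 \<Otimes>\<^sub>M (std_gauss_vec :: (real^'k) measure)) = sets (borel \<Otimes>\<^sub>M (borel :: (real^'k) measure))"
        by (rule sets_pair_measure_cong) simp_all
      have e2: "(borel \<Otimes>\<^sub>M (borel :: (real^'k) measure)) = (borel :: (real \<times> (real^'k)) measure)"
        by (rule borel_prod)
      have "sets (N01 \<Otimes>\<^sub>M (std_gauss_vec :: (real^'k) measure)) = sets (borel :: (real \<times> (real^'k)) measure)"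
        by (simp only: e1 e2)
      then show ?thesis by simp
    qed
    fix A :: "real set" and B :: "(real^'k) set" assume A: "A \<in> sets N01" and B: "B \<in> sets std_gauss_vec"
    have Ab: "A \<in> sets borel" using A by simp
    have Bb: "B \<in> sets borel" using B by simp
    define Sa :: "(real^'b) set" where "Sa = {y. y $ a \<in> A}"
    have Sab: "Sa \<in> sets borel" unfolding Sa_def using vec_nth_pre[OF Ab] by (simp add: vimage_def)
    define MA where "MA = distr (density (std_gauss_vec :: (real^'b) measure) (indicator Sa)) borel proj"
    have MAe: "emeasure MA X = emeasure (std_gauss_vec :: (real^'b) measure) (Sa \<inter> proj -` X)" if X: "X \<in> sets borel" for X
    proof -
      have pm: "proj \<in> measurable (density (std_gauss_vec :: (real^'b) measure) (indicator Sa)) borel"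
      proof -
        have eq: "measurable (density (std_gauss_vec :: (real^'b) measure) (indicator Sa)) borel = measurable borel (borel :: (real^'k) measure)"
          by (rule measurable_cong_sets) simp_all
        show ?thesis by (subst eq) (rule mp)
      qed
      have "emeasure MA X = emeasure (density (std_gauss_vec :: (real^'b) measure) (indicator Sa)) (proj -` X \<inter> space (density std_gauss_vec (indicator Sa)))"
        unfolding MA_def by (rule emeasure_distr[OF pm X])
      also have "proj -` X \<inter> space (density (std_gauss_vec :: (real^'b) measure) (indicator Sa)) = proj -` X"
        using sets_eq_imp_space_eq[OF sets_G[where 'k='b]] by simp
      also have "emeasure (density (std_gauss_vec :: (real^'b) measure) (indicator Sa)) (proj -` X) = emeasure std_gauss_vec (Sa \<inter> proj -` X)"
        using Sab measurable_sets[OF mp X] by (intro emeasure_restricted) auto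
      finally show ?thesis .
    qed
    have cA: "emeasure N01 A < top"
    proof -
      have "emeasure N01 A \<le> 1" by (rule prob_space.emeasure_le_1[OF prob_N01])
      then show ?thesis by (metis ennreal_1 ennreal_less_top le_less_trans)
    qed
    have "emeasure MA B = emeasure N01 A * emeasure std_gauss_vec B"
    proof (rule G_eqI_scaled[OF _ cA _ Bb])
      show "sets MA = sets borel" by (simp add: MA_def)
      fix Bf :: "'k \<Rightarrow> real set" assume Bf: "\<And>i. Bf i \<in> sets borel"
      define C where "C b = (if b = a then A else if b \<in> range \<iota> then Bf (inv \<iota> b) else UNIV)" for b
      have Cb: "C b \<in> sets borel" for b using Ab Bf by (simp add: C_def)
      have set_eq: "Sa \<inter> proj -` {x. \<forall>i. x $ i \<in> Bf i} = {y. \<forall>b. y $ b \<in> C b}"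
      proof (intro set_eqI iffI)
        fix y assume "y \<in> Sa \<inter> proj -` {x. \<forall>i. x $ i \<in> Bf i}"
        then show "y \<in> {y. \<forall>b. y $ b \<in> C b}"
          using inv_f_f[OF inj] by (auto simp: Sa_def proj_def C_def)
      next
        fix y assume "y \<in> {y. \<forall>b. y $ b \<in> C b}"
        then have h: "\<And>b. y $ b \<in> C b" by simp
        have "y $ a \<in> A" using h[of a] by (simp add: C_def)
        moreover have "y $ \<iota> i \<in> Bf i" for i
        proof -
          have "\<iota> i \<noteq> a" using a by auto
          then show ?thesis using h[of "\<iota> i"] inv_f_f[OF inj, of i] by (simp add: C_def)
        qed
        ultimately show "y \<in> Sa \<inter> proj -` {x. \<forall>i. x $ i \<in> Bf i}" by (simp add: Sa_def proj_def)
      qed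
      have N1: "emeasure N01 UNIV = 1" using prob_space.emeasure_space_1[OF prob_N01] by simp
      have "emeasure MA {x. \<forall>i. x $ i \<in> Bf i} = emeasure (std_gauss_vec :: (real^'b) measure) {y. \<forall>b. y $ b \<in> C b}"
        using MAe[OF prodset_borel[OF Bf]] set_eq by simp
      also have "\<dots> = (\<Prod>b\<in>UNIV. emeasure N01 (C b))" by (rule G_prod[OF Cb])
      also have "\<dots> = (\<Prod>b\<in>UNIV. (if b = a then emeasure N01 A else 1) * (if b \<in> range \<iota> then emeasure N01 (Bf (inv \<iota> b)) else 1))"
        using a N1 by (intro prod.cong) (auto simp: C_def)
      also have "\<dots> = emeasure N01 A * (\<Prod>b\<in>range \<iota>. emeasure N01 (Bf (inv \<iota> b)))"
      proof -
        have "(\<Prod>b\<in>UNIV. (if b \<in> range \<iota> then emeasure N01 (Bf (inv \<iota> b)) else 1)) = (\<Prod>b\<in>UNIV \<inter> range \<iota>. emeasure N01 (Bf (inv \<iota> b)))"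
          by (rule prod.inter_restrict[symmetric]) simp
        then show ?thesis by (simp add: prod.distrib)
      qed
      also have "(\<Prod>b\<in>range \<iota>. emeasure N01 (Bf (inv \<iota> b))) = (\<Prod>i\<in>UNIV. emeasure N01 (Bf i))"
        by (subst prod.reindex[OF inj]) (simp add: inv_f_f[OF inj])
      finally show "emeasure MA {x. \<forall>i. x $ i \<in> Bf i} = emeasure N01 A * (\<Prod>i\<in>UNIV. emeasure N01 (Bf i))" .
    qed
    moreover have "emeasure MA B = emeasure (distr (std_gauss_vec :: (real^'b) measure) borel (\<lambda>y. (y $ a, \<chi> i. y $ \<iota> i))) (A \<times> B)"
    proof -
      have "(\<lambda>y::real^'b. (y $ a, \<chi> i. y $ \<iota> i)) -` (A \<times> B) \<inter> space std_gauss_vec = Sa \<inter> proj -` B"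
        using sets_eq_imp_space_eq[OF sets_G] by (auto simp: Sa_def proj_def)
      moreover have "A \<times> B \<in> sets (borel :: (real \<times> (real^'k)) measure)"
        using Ab Bb by (simp add: borel_prod[symmetric])
      ultimately show ?thesis using MAe[OF Bb] emeasure_distr[OF mpi] by simp
    qed
    ultimately show "emeasure N01 A * emeasure std_gauss_vec B = emeasure (distr (std_gauss_vec :: (real^'b) measure) borel (\<lambda>y. (y $ a, \<chi> i. y $ \<iota> i))) (A \<times> B)"
      by simp
  qed
qed

section \<open>Householder reflection\<close>

definition refl_map :: "'a::real_inner \<Rightarrow> 'a \<Rightarrow> 'a \<Rightarrow> 'a" where
  "refl_map p q y = (if p = q then y else y - (2 * ((p - q) \<bullet> y) / ((p - q) \<bullet> (p - q))) *\<^sub>R (p - q))"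

lemma refl_map_props:
  fixes p q :: "'a::real_inner"
  assumes pq: "p \<bullet> p = q \<bullet> q"
  shows "p \<bullet> refl_map p q y = q \<bullet> y" and "q \<bullet> refl_map p q y = p \<bullet> y"
    and "r \<bullet> p = r \<bullet> q \<Longrightarrow> r \<bullet> refl_map p q y = r \<bullet> y"
proof -
  show "p \<bullet> refl_map p q y = q \<bullet> y"
  proof (cases "p = q")
    case False
    define v where "v = p - q"
    have vv: "v \<bullet> v = 2 * (p \<bullet> v)" using pq by (simp add: v_def inner_diff_left inner_diff_right inner_commute)
    have v0: "v \<bullet> v \<noteq> 0" using False by (simp add: v_def)
    have "p \<bullet> refl_map p q y = p \<bullet> y - (2 * (v \<bullet> y) / (v \<bullet> v)) * (p \<bullet> v)"
      using False by (simp add: refl_map_def v_def[symmetric] inner_diff_right)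
    also have "\<dots> = p \<bullet> y - v \<bullet> y" using vv v0 by (simp add: field_simps)
    also have "\<dots> = q \<bullet> y" by (simp add: v_def inner_diff_left)
    finally show ?thesis .
  qed (simp add: refl_map_def)
  show "q \<bullet> refl_map p q y = p \<bullet> y"
  proof (cases "p = q")
    case False
    define v where "v = p - q"
    have vv: "v \<bullet> v = - 2 * (q \<bullet> v)" using pq by (simp add: v_def inner_diff_left inner_diff_right inner_commute)
    have v0: "v \<bullet> v \<noteq> 0" using False by (simp add: v_def)
    have "q \<bullet> refl_map p q y = q \<bullet> y - (2 * (v \<bullet> y) / (v \<bullet> v)) * (q \<bullet> v)"
      using False by (simp add: refl_map_def v_def[symmetric] inner_diff_right)
    also have "\<dots> = q \<bullet> y + v \<bullet> y" using vv v0 by (simp add: field_simps)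
    also have "\<dots> = p \<bullet> y" by (simp add: v_def inner_diff_left)
    finally show ?thesis .
  qed (simp add: refl_map_def)
  assume r: "r \<bullet> p = r \<bullet> q"
  show "r \<bullet> refl_map p q y = r \<bullet> y"
    using r by (simp add: refl_map_def inner_diff_right)
qed

lemma refl_map_orth:
  fixes p q :: "'a::real_inner"
  shows "orthogonal_transformation (refl_map p q)"
proof (cases "p = q")
  case True
  then show ?thesis by (simp add: refl_map_def[abs_def] orthogonal_transformation_id[unfolded id_def])
next
  case False
  define v where "v = p - q"
  have v0: "v \<bullet> v \<noteq> 0" using False by (simp add: v_def)
  have R: "refl_map p q = (\<lambda>y. y - (2 * (v \<bullet> y) / (v \<bullet> v)) *\<^sub>R v)"
    using False by (simp add: refl_map_def[abs_def] v_def)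
  show ?thesis
    unfolding orthogonal_transformation_def R
  proof (intro conjI allI)
    show "linear (\<lambda>y. y - (2 * (v \<bullet> y) / (v \<bullet> v)) *\<^sub>R v)"
      by (intro linearI) (simp_all add: inner_add_right add_divide_distrib scaleR_add_left algebra_simps)
    fix y w
    show "(y - (2 * (v \<bullet> y) / (v \<bullet> v)) *\<^sub>R v) \<bullet> (w - (2 * (v \<bullet> w) / (v \<bullet> v)) *\<^sub>R v) = y \<bullet> w"
      using v0 by (simp add: inner_diff_left inner_diff_right inner_commute field_simps)
  qed
qed

definition lift :: "'b \<Rightarrow> ('k \<Rightarrow> 'b) \<Rightarrow> real \<Rightarrow> real^'k \<Rightarrow> real^'b" where
  "lift a \<iota> \<alpha> w = (\<chi> b. if b = a then \<alpha> else if b \<in> range \<iota> then w $ inv \<iota> b else 0)"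

lemma lift_inner:
  fixes a :: "'b::finite" and \<iota> :: "'k::finite \<Rightarrow> 'b"
  assumes inj: "inj \<iota>" and a: "a \<notin> range \<iota>"
  shows "lift a \<iota> \<alpha> w \<bullet> y = \<alpha> * y $ a + (\<Sum>i\<in>UNIV. w $ i * y $ \<iota> i)"
proof -
  have "lift a \<iota> \<alpha> w \<bullet> y = (\<Sum>b\<in>UNIV. (if b = a then \<alpha> * y $ a else 0) + (if b \<in> range \<iota> then w $ inv \<iota> b * y $ b else 0))"
    unfolding lift_def inner_vec_def using a by (intro sum.cong) auto
  also have "\<dots> = \<alpha> * y $ a + (\<Sum>b\<in>UNIV \<inter> range \<iota>. w $ inv \<iota> b * y $ b)"
  proof -
    have "(\<Sum>b\<in>UNIV. (if b \<in> range \<iota> then w $ inv \<iota> b * y $ b else 0)) = (\<Sum>b\<in>UNIV \<inter> range \<iota>. w $ inv \<iota> b * y $ b)"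
      by (rule sum.inter_restrict[symmetric]) simp
    then show ?thesis by (simp add: sum.distrib)
  qed
  also have "(\<Sum>b\<in>UNIV \<inter> range \<iota>. w $ inv \<iota> b * y $ b) = (\<Sum>i\<in>UNIV. w $ i * y $ \<iota> i)"
    by (simp add: sum.reindex[OF inj] inv_f_f[OF inj])
  finally show ?thesis .
qed

lemma lift_nth_a: "lift a \<iota> \<alpha> w $ a = \<alpha>" by (simp add: lift_def)
lemma lift_nth_i:
  assumes "inj \<iota>" "a \<notin> range \<iota>" shows "lift a \<iota> \<alpha> w $ \<iota> i = w $ i"
  using assms by (auto simp: lift_def inv_f_f)

lemma lift_lift:
  fixes a :: "'b::finite" and \<iota> :: "'k::finite \<Rightarrow> 'b"
  assumes inj: "inj \<iota>" and a: "a \<notin> range \<iota>"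
  shows "lift a \<iota> \<alpha> w \<bullet> lift a \<iota> \<beta> u = \<alpha> * \<beta> + w \<bullet> u"
  by (subst lift_inner[OF assms]) (simp add: lift_nth_a lift_nth_i[OF assms] inner_vec_def)

lemma meas_vec_nth_raw[measurable (raw)]:
  "f \<in> borel_measurable M \<Longrightarrow> (\<lambda>x. (f x :: real^'k) $ i) \<in> borel_measurable M"
  using measurable_compose[OF _ measurable_vec_nth] by blast

lemma meas_vec_lambda_raw[measurable (raw)]:
  assumes "\<And>i. (\<lambda>x. g x i) \<in> borel_measurable M"
  shows "(\<lambda>x. (vec_lambda (g x) :: real^'k)) \<in> borel_measurable M"
proof -
  have "(\<lambda>x. \<Sum>i\<in>UNIV. g x i *\<^sub>R axis i (1::real) :: real^'k) \<in> borel_measurable M"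
    using assms by measurable
  then show ?thesis by (simp add: vec_lambda_sum[symmetric])
qed

locale KS =
  fixes Th :: "real^'n^'n" and d :: "real^'n" and A :: "real^'n^'n" and j :: 'n
    and a :: "'b::{finite,wellorder}" and \<iota> :: "'n \<Rightarrow> 'b"
  assumes sym: "transpose Th = Th" and pos: "Th $ j $ j > 0"
    and AA: "A ** transpose A = 2 *\<^sub>R diagm d - diagm d ** Th ** diagm d"
    and inj: "inj \<iota>" and a: "a \<notin> range \<iota>"
begin

definition "th = Th $ j $ j"
definition "sc = sqrt (1 / th)"
definition "mmean x = (\<Sum>k\<in>UNIV - {j}. x $ k * (- Th $ k $ j / Th $ j $ j))"
definition "Mt = mat 1 - diagm d ** Th"
definition "xe x e = vupd x j (mmean x + sc * e)"
definition "Psi x w = (xe x (fst w), Mt *v xe x (fst w) + A *v snd w)"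
definition "proj y = (\<chi> i. y $ \<iota> i)"
definition "Phi x y = Psi x (y $ a, proj y)"
definition "beta x k = (Mt *v vupd x j (mmean x)) $ k"
definition "cc k = sc * Mt $ k $ j"
definition "r0 = lift a \<iota> sc 0"
definition "RR k = lift a \<iota> (cc k) (A $ k)"

lemma th_pos: "th > 0" using pos by (simp add: th_def)
lemma sc2: "sc * sc = 1 / th" using th_pos by (simp add: sc_def)

lemma Thsym: "Th $ k $ l = Th $ l $ k"
proof -
  have "transpose Th $ k $ l = Th $ l $ k" by (simp add: transpose_def)
  then show ?thesis using sym by simp
qed

lemma sum_single: "(\<And>m. m \<noteq> k \<Longrightarrow> g m = 0) \<Longrightarrow> (\<Sum>m\<in>(UNIV::'z::finite set). g m) = (g k :: real)"
  by (simp add: sum.remove[of UNIV k])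

lemma dM: "(diagm d ** M) $ k $ l = d $ k * (M::real^'n^'n) $ k $ l"
  unfolding matrix_matrix_mult_def diagm_def by (simp add: sum_single[of k])

lemma Md: "((M::real^'n^'n) ** diagm d) $ k $ l = M $ k $ l * d $ l"
  unfolding matrix_matrix_mult_def diagm_def by (simp add: sum_single[of l])

lemma Mt_entry: "Mt $ k $ l = (if k = l then 1 else 0) - d $ k * Th $ k $ l"
  by (simp add: Mt_def dM mat_def)

lemma S_entry: "(A ** transpose A) $ k $ l = 2 * (if k = l then d $ k else 0) - d $ k * Th $ k $ l * d $ l"
proof -
  have de: "diagm d $ k $ l = (if k = l then d $ k else 0)" by (simp add: diagm_def)
  show ?thesis unfolding AA by (simp add: dM Md de)
qed

lemma AA_inner: "(A ** transpose A) $ k $ l = A $ k \<bullet> A $ l"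
  by (simp add: matrix_matrix_mult_def transpose_def inner_vec_def)

lemma vupd_add: "vupd x j (u + t) = vupd x j u + t *\<^sub>R axis j 1"
  by (simp add: vec_eq_iff vupd_def axis_def)

lemma vupd_vupd: "vupd (vupd x j u) j w = vupd x j w"
  by (simp add: vec_eq_iff vupd_def)

lemma vupd_nth: "vupd x j u $ j = u" by (simp add: vupd_def)

lemma r0_inner: "r0 \<bullet> y = sc * y $ a"
  by (simp add: r0_def lift_inner[OF inj a])

lemma RR_inner: "RR k \<bullet> y = cc k * y $ a + (A *v proj y) $ k"
  by (simp add: RR_def lift_inner[OF inj a] matrix_vector_mult_def proj_def)

lemma PhiRep: "Phi x y = (vupd x j (mmean x + r0 \<bullet> y), \<chi> k. beta x k + RR k \<bullet> y)"
proof -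
  have x: "xe x (y $ a) = vupd x j (mmean x) + (sc * y $ a) *\<^sub>R axis j 1"
    by (simp add: xe_def vupd_add)
  have "(Mt *v xe x (y $ a) + A *v proj y) $ k = beta x k + RR k \<bullet> y" for k
    by (simp add: x matrix_vector_right_distrib matrix_vector_mult_scaleR mv_axis beta_def RR_inner cc_def)
  then show ?thesis
    by (simp add: Phi_def Psi_def r0_inner xe_def vec_eq_iff)
qed

lemma beta_j: "beta x j = mmean x"
proof -
  define x0 where "x0 = vupd x j (mmean x)"
  have "beta x j = (\<Sum>l\<in>UNIV. ((if j = l then 1 else 0) - d $ j * Th $ j $ l) * x0 $ l)"
    by (simp add: beta_def x0_def matrix_vector_mult_def Mt_entry)
  also have "\<dots> = x0 $ j - d $ j * (\<Sum>l\<in>UNIV. Th $ j $ l * x0 $ l)"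
  proof -
    have "((if j = l then 1 else 0) - d $ j * Th $ j $ l) * x0 $ l = (if j = l then x0 $ l else 0) - d $ j * (Th $ j $ l * x0 $ l)" for l
      by (auto simp: algebra_simps)
    then show ?thesis by (simp add: sum_subtractf sum_distrib_left)
  qed
  also have "(\<Sum>l\<in>UNIV. Th $ j $ l * x0 $ l) = Th $ j $ j * x0 $ j + (\<Sum>l\<in>UNIV - {j}. Th $ j $ l * x0 $ l)"
    by (simp add: sum.remove[of UNIV j])
  also have "(\<Sum>l\<in>UNIV - {j}. Th $ j $ l * x0 $ l) = (\<Sum>l\<in>UNIV - {j}. Th $ j $ l * x $ l)"
    by (intro sum.cong) (auto simp: x0_def vupd_def)
  also have "Th $ j $ j * x0 $ j = - (\<Sum>l\<in>UNIV - {j}. Th $ j $ l * x $ l)"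
  proof -
    have "Th $ j $ j * x0 $ j = (\<Sum>k\<in>UNIV - {j}. Th $ j $ j * (x $ k * (- Th $ k $ j / Th $ j $ j)))"
      by (simp add: x0_def vupd_def mmean_def sum_distrib_left)
    also have "\<dots> = (\<Sum>k\<in>UNIV - {j}. - (Th $ j $ k * x $ k))"
    proof (intro sum.cong refl)
      fix k show "Th $ j $ j * (x $ k * (- Th $ k $ j / Th $ j $ j)) = - (Th $ j $ k * x $ k)"
        using pos Thsym[of k j] by simp
    qed
    finally show ?thesis by (simp add: sum_negf)
  qed
  finally show ?thesis by (simp add: x0_def vupd_def)
qed

lemma alg1: "(t::real) > 0 \<Longrightarrow> (1/t)*((1 - x*t)*(1 - x*t)) + (2*x - x*t*x) = 1/t"
  by (simp add: field_simps)

lemma alg2: "(t::real) > 0 \<Longrightarrow> (1/t)*(-D) = (1/t)*(-D*(1 - x*t)) - D*x"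
  by (simp add: field_simps)

lemma cov1: "r0 \<bullet> r0 = RR j \<bullet> RR j"
proof -
  have L: "r0 \<bullet> r0 = sc * sc" by (simp add: r0_def lift_lift[OF inj a])
  have f1: "RR j \<bullet> RR j = cc j * cc j + (A ** transpose A) $ j $ j"
    by (simp add: RR_def lift_lift[OF inj a] AA_inner)
  have f2: "cc j = sc * (1 - d $ j * th)" by (simp add: cc_def Mt_entry th_def)
  have f3: "(A ** transpose A) $ j $ j = 2 * d $ j - d $ j * th * d $ j"
    by (simp add: S_entry th_def)
  have R: "RR j \<bullet> RR j = (sc * sc) * ((1 - d $ j * th) * (1 - d $ j * th)) + (2 * d $ j - d $ j * th * d $ j)"
    unfolding f1 f2 f3 by (simp add: algebra_simps)
  show ?thesis unfolding L R sc2 by (rule alg1[OF th_pos, symmetric])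
qed

lemma cov2: "k \<noteq> j \<Longrightarrow> RR k \<bullet> r0 = RR k \<bullet> RR j"
proof -
  assume kj: "k \<noteq> j"
  have f0: "RR k \<bullet> r0 = cc k * sc" by (simp add: r0_def RR_def lift_lift[OF inj a])
  have f1: "RR k \<bullet> RR j = cc k * cc j + (A ** transpose A) $ k $ j"
    by (simp add: RR_def lift_lift[OF inj a] AA_inner)
  have ck: "cc k = sc * (- (d $ k * Th $ k $ j))" using kj by (simp add: cc_def Mt_entry)
  have cj: "cc j = sc * (1 - d $ j * th)" by (simp add: cc_def Mt_entry th_def)
  have S: "(A ** transpose A) $ k $ j = - (d $ k * Th $ k $ j) * d $ j"
    using kj by (simp add: S_entry)
  have L: "RR k \<bullet> r0 = (sc * sc) * (- (d $ k * Th $ k $ j))" unfolding f0 ck by (simp add: algebra_simps)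
  have R: "RR k \<bullet> RR j = (sc * sc) * (- (d $ k * Th $ k $ j) * (1 - d $ j * th)) - (d $ k * Th $ k $ j) * d $ j"
    unfolding f1 ck cj S by (simp add: algebra_simps)
  show ?thesis unfolding L R sc2 by (rule alg2[OF th_pos])
qed

definition "Tr = refl_map r0 (RR j)"

lemma Tr_orth: "orthogonal_transformation Tr"
  unfolding Tr_def by (rule refl_map_orth)

lemma Phi_swap: "Phi x (Tr y) = swap_j j (Phi x y)"
proof -
  have p1: "r0 \<bullet> Tr y = RR j \<bullet> y" unfolding Tr_def by (rule refl_map_props(1)[OF cov1])
  have p2: "RR j \<bullet> Tr y = r0 \<bullet> y" unfolding Tr_def by (rule refl_map_props(2)[OF cov1])
  have p3: "k \<noteq> j \<Longrightarrow> RR k \<bullet> Tr y = RR k \<bullet> y" for k unfolding Tr_def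
    by (rule refl_map_props(3)[OF cov1 cov2])
  show ?thesis
    unfolding PhiRep swap_j_def
    by (simp add: p1 p2 p3 vupd_vupd beta_j vec_eq_iff vupd_def)
qed

end

lemma meas_from_pair:
  "f \<in> measurable (borel \<Otimes>\<^sub>M borel) N \<Longrightarrow> f \<in> measurable (borel :: ('a::euclidean_space \<times> 'c::euclidean_space) measure) N"
  by (simp add: borel_prod)

lemma meas_to_pair:
  "f \<in> measurable M (borel \<Otimes>\<^sub>M borel) \<Longrightarrow> f \<in> measurable M (borel :: ('a::euclidean_space \<times> 'c::euclidean_space) measure)"
  by (simp add: borel_prod)

lemma borel_pair_meas[measurable (raw)]:
  fixes f :: "'z \<Rightarrow> 'a::euclidean_space" and g :: "'z \<Rightarrow> 'c::euclidean_space"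
  assumes "f \<in> borel_measurable M" "g \<in> borel_measurable M"
  shows "(\<lambda>x. (f x, g x)) \<in> borel_measurable M"
  by (rule meas_to_pair) (use assms in measurable)

lemma normal1_eq:
  assumes v: "v > 0"
  shows "normal1 m v = distr N01 borel (\<lambda>e. m + sqrt v * e)"
proof -
  interpret N: prob_space N01 by (rule prob_N01)
  have "distributed N01 lborel (\<lambda>x. x) std_normal_density"
    unfolding distributed_def
  proof (intro conjI)
    show "distr N01 lborel (\<lambda>x. x) = density lborel (\<lambda>x. ennreal (std_normal_density x))"
      by (rule distr_id2) simp
  qed simp_all
  then have "distributed N01 lborel (\<lambda>x. m + sqrt v * x) (normal_density (m + sqrt v * 0) (\<bar>sqrt v\<bar> * 1))"
    by (rule N.normal_density_affine) (use v in auto)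
  then have "distributed N01 lborel (\<lambda>x. m + sqrt v * x) (normal_density m (sqrt v))"
    using v by simp
  then have "distr N01 lborel (\<lambda>x. m + sqrt v * x) = density lborel (normal_density m (sqrt v))"
    by (simp add: distributed_def)
  moreover have "distr N01 borel (\<lambda>x. m + sqrt v * x) = distr N01 lborel (\<lambda>x. m + sqrt v * x)"
    by (rule distr_cong) simp_all
  ultimately show ?thesis by (simp add: normal1_def)
qed

lemma bind_distr_pair:
  fixes M :: "'a measure" and N :: "'c measure" and F :: "'a \<times> 'c \<Rightarrow> 'd"
  assumes pM: "prob_space M" and pN: "prob_space N"
  assumes F: "F \<in> measurable (M \<Otimes>\<^sub>M N) L"
  shows "M \<bind> (\<lambda>e. distr N L (\<lambda>z. F (e, z))) = distr (M \<Otimes>\<^sub>M N) L F"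
proof -
  interpret M: prob_space M by (rule pM)
  interpret N: prob_space N by (rule pN)
  have ker: "(\<lambda>e. distr N L (\<lambda>z. F (e, z))) \<in> measurable M (subprob_algebra L)"
  proof (rule measurable_distr2)
    show "(\<lambda>(e, z). F (e, z)) \<in> measurable (M \<Otimes>\<^sub>M N) L" using F by simp
    show "(\<lambda>x. N) \<in> measurable M (subprob_algebra N)" by (intro measurable_const N.M_in_subprob)
  qed
  have ne: "space M \<noteq> {}" by (rule M.not_empty)
  show ?thesis
  proof (rule measure_eqI)
    show "sets (M \<bind> (\<lambda>e. distr N L (\<lambda>z. F (e, z)))) = sets (distr (M \<Otimes>\<^sub>M N) L F)"
      using ne by (subst sets_bind[where N=L]) simp_all
    fix X assume X: "X \<in> sets (M \<bind> (\<lambda>e. distr N L (\<lambda>z. F (e, z))))"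
    then have XL: "X \<in> sets L" using ne by (subst (asm) sets_bind[where N=L]) simp_all
    have Fz: "(\<lambda>z. F (e, z)) \<in> measurable N L" if "e \<in> space M" for e
      using F that by measurable
    have "emeasure (M \<bind> (\<lambda>e. distr N L (\<lambda>z. F (e, z)))) X = (\<integral>\<^sup>+e. emeasure (distr N L (\<lambda>z. F (e, z))) X \<partial>M)"
      by (rule emeasure_bind[OF ne ker XL])
    also have "\<dots> = (\<integral>\<^sup>+e. emeasure N (Pair e -` (F -` X \<inter> space (M \<Otimes>\<^sub>M N))) \<partial>M)"
    proof (rule nn_integral_cong)
      fix e assume e: "e \<in> space M"
      have "emeasure (distr N L (\<lambda>z. F (e, z))) X = emeasure N ((\<lambda>z. F (e, z)) -` X \<inter> space N)"
        by (rule emeasure_distr[OF Fz[OF e] XL])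
      also have "(\<lambda>z. F (e, z)) -` X \<inter> space N = Pair e -` (F -` X \<inter> space (M \<Otimes>\<^sub>M N))"
        using e by (auto simp: space_pair_measure)
      finally show "emeasure (distr N L (\<lambda>z. F (e, z))) X = emeasure N (Pair e -` (F -` X \<inter> space (M \<Otimes>\<^sub>M N)))" .
    qed
    also have "\<dots> = emeasure (M \<Otimes>\<^sub>M N) (F -` X \<inter> space (M \<Otimes>\<^sub>M N))"
      using measurable_sets[OF F XL] by (rule N.emeasure_pair_measure_alt[symmetric])
    also have "\<dots> = emeasure (distr (M \<Otimes>\<^sub>M N) L F) X"
      by (rule emeasure_distr[OF F XL, symmetric])
    finally show "emeasure (M \<bind> (\<lambda>e. distr N L (\<lambda>z. F (e, z)))) X = emeasure (distr (M \<Otimes>\<^sub>M N) L F) X" .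
  qed
qed

lemma meas_N01: "f \<in> borel_measurable borel \<Longrightarrow> f \<in> borel_measurable N01"
  by (simp add: measurable_cong_sets[OF sets_N01 refl])

lemma meas_G: "f \<in> measurable borel N \<Longrightarrow> f \<in> measurable (std_gauss_vec :: (real^'k) measure) N"
  by (simp add: measurable_cong_sets[OF sets_G refl])

lemma meas_pairG:
  fixes M :: "'a::topological_space measure" and K :: "'c::topological_space measure"
  assumes "sets M = sets borel" "sets K = sets borel" "f \<in> measurable (borel \<Otimes>\<^sub>M borel) N"
  shows "f \<in> measurable (M \<Otimes>\<^sub>M K) N"
proof -
  have "sets (M \<Otimes>\<^sub>M K) = sets (borel \<Otimes>\<^sub>M borel)" by (rule sets_pair_measure_cong) (simp_all add: assms)
  then have "measurable (M \<Otimes>\<^sub>M K) N = measurable (borel \<Otimes>\<^sub>M borel) N" by (rule measurable_cong_sets) simp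
  then show ?thesis using assms(3) by simp
qed

locale KS2 = KS Th d A j a \<iota> for Th :: "real^'n^'n" and d and A and j and a :: "'b::{finite,wellorder}" and \<iota> +
  assumes Adef: "A = (SOME A :: real^'n^'n. A ** transpose A = 2 *\<^sub>R diagm d - diagm d ** Th ** diagm d)"
begin

definition "Q' x = distr (Q_cond Th j x) borel (vupd x j)"
definition "Pk x = distr (knock_kernel Th d x) borel (Pair x)"

lemma xe_meas: "(\<lambda>p::(real^'n) \<times> real. xe (fst p) (snd p)) \<in> borel_measurable (borel \<Otimes>\<^sub>M borel)"
  unfolding xe_def vupd_def mmean_def by measurable

lemma xe_meas1: "xe x \<in> borel_measurable N01"
  by (rule meas_N01) (unfold xe_def vupd_def mmean_def, measurable)

lemma vupd_meas: "vupd x j \<in> borel_measurable borel"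
  unfolding vupd_def by measurable

lemma Q'_eq: "Q' x = distr N01 borel (xe x)"
proof -
  have "Q_cond Th j x = distr N01 borel (\<lambda>e. mmean x + sc * e)"
    unfolding Q_cond_def mmean_def[symmetric] sc_def th_def using pos by (intro normal1_eq) simp
  moreover have "(\<lambda>e. mmean x + sc * e) \<in> measurable N01 borel" by (rule meas_N01) measurable
  ultimately show ?thesis
    unfolding Q'_def by (simp add: distr_distr[OF vupd_meas] comp_def xe_def[abs_def])
qed

lemma Q'_meas: "Q' \<in> measurable borel (subprob_algebra borel)"
proof -
  have "(\<lambda>x. distr N01 borel (xe x)) \<in> measurable borel (subprob_algebra borel)"
  proof (rule measurable_distr2)
    show "(\<lambda>(x, e). xe x e) \<in> measurable (borel \<Otimes>\<^sub>M N01) borel"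
    proof -
      have "(\<lambda>p. xe (fst p) (snd p)) \<in> measurable (borel \<Otimes>\<^sub>M N01) borel"
        by (rule meas_pairG[OF _ _ xe_meas]) simp_all
      then show ?thesis by (simp add: case_prod_beta')
    qed
    show "(\<lambda>x. N01) \<in> measurable borel (subprob_algebra N01)"
      by (intro measurable_const prob_space.M_in_subprob prob_N01)
  qed
  moreover have "Q' = (\<lambda>x. distr N01 borel (xe x))" by (simp add: fun_eq_iff Q'_eq)
  ultimately show ?thesis by simp
qed

lemma lin_meas: "(\<lambda>z::real^'n. c + (B::real^'n^'n) *v z) \<in> borel_measurable borel"
  unfolding matrix_vector_mult_def by measurable

lemma Pk_eq: "Pk x = distr (std_gauss_vec :: (real^'n) measure) borel (\<lambda>z. (x, Mt *v x + A *v z))"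
proof -
  have "knock_kernel Th d x = distr (std_gauss_vec :: (real^'n) measure) borel (\<lambda>z. Mt *v x + A *v z)"
    unfolding knock_kernel_def gauss_vec_def Adef[symmetric] Mt_def by simp
  moreover have "(\<lambda>z. Mt *v x + A *v z) \<in> measurable (std_gauss_vec :: (real^'n) measure) borel"
    by (rule meas_G) (rule lin_meas)
  moreover have "Pair x \<in> measurable (borel :: (real^'n) measure) (borel :: ((real^'n) \<times> (real^'n)) measure)"
  proof -
    have "(\<lambda>y::real^'n. (x, y)) \<in> borel_measurable borel" by measurable
    then show ?thesis by (simp add: Pair_def[symmetric])
  qed
  ultimately show ?thesis
    unfolding Pk_def by (simp add: distr_distr comp_def)
qed

lemma Pk_meas: "Pk \<in> measurable borel (subprob_algebra borel)"
proof -
  have "(\<lambda>x. distr (std_gauss_vec :: (real^'n) measure) borel (\<lambda>z. (x, Mt *v x + A *v z))) \<in> measurable borel (subprob_algebra borel)"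
  proof (rule measurable_distr2)
    have pm: "(\<lambda>p::(real^'n) \<times> (real^'n). (fst p, Mt *v fst p + A *v snd p)) \<in> borel_measurable (borel \<Otimes>\<^sub>M borel)"
      unfolding matrix_vector_mult_def by measurable
    have "(\<lambda>p::(real^'n) \<times> (real^'n). (fst p, Mt *v fst p + A *v snd p)) \<in> measurable (borel \<Otimes>\<^sub>M (std_gauss_vec :: (real^'n) measure)) borel"
      by (rule meas_pairG[OF _ _ pm]) simp_all
    then show "(\<lambda>(x, z). (x, Mt *v x + A *v z)) \<in> measurable (borel \<Otimes>\<^sub>M std_gauss_vec) borel"
      by (simp add: case_prod_beta')
    show "(\<lambda>x. std_gauss_vec) \<in> measurable borel (subprob_algebra (std_gauss_vec :: (real^'n) measure))"
      by (intro measurable_const prob_space.M_in_subprob prob_G)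
  qed
  moreover have "Pk = (\<lambda>x. distr (std_gauss_vec :: (real^'n) measure) borel (\<lambda>z. (x, Mt *v x + A *v z)))"
    by (simp add: fun_eq_iff Pk_eq)
  ultimately show ?thesis by simp
qed

lemma Psi_meas2: "Psi x \<in> borel_measurable (borel \<Otimes>\<^sub>M borel)"
  unfolding Psi_def xe_def vupd_def mmean_def matrix_vector_mult_def by measurable

lemma K_eq: "Q' x \<bind> Pk = distr (std_gauss_vec :: (real^'b::_) measure) borel (Phi x)"
proof -
  have ne: "space N01 \<noteq> {}" by simp
  have "Q' x \<bind> Pk = N01 \<bind> (\<lambda>e. Pk (xe x e))"
    unfolding Q'_eq by (rule bind_distr[OF xe_meas1 Pk_meas ne])
  also have "\<dots> = N01 \<bind> (\<lambda>e. distr (std_gauss_vec :: (real^'n) measure) borel (\<lambda>z. Psi x (e, z)))"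
    by (simp add: Pk_eq Psi_def)
  also have "\<dots> = distr (N01 \<Otimes>\<^sub>M (std_gauss_vec :: (real^'n) measure)) borel (Psi x)"
  proof (rule bind_distr_pair[OF prob_N01 prob_G])
    show "Psi x \<in> measurable (N01 \<Otimes>\<^sub>M (std_gauss_vec :: (real^'n) measure)) borel"
      by (rule meas_pairG[OF _ _ Psi_meas2]) simp_all
  qed
  also have "\<dots> = distr (distr (std_gauss_vec :: (real^'b::_) measure) borel (\<lambda>y. (y $ a, \<chi> i. y $ \<iota> i))) borel (Psi x)"
    by (simp add: G_split[OF inj a])
  also have "\<dots> = distr (std_gauss_vec :: (real^'b::_) measure) borel (Psi x \<circ> (\<lambda>y. (y $ a, \<chi> i. y $ \<iota> i)))"
  proof (rule distr_distr)
    show "Psi x \<in> measurable (borel :: (real \<times> (real^'n)) measure) borel"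
      by (rule meas_from_pair[OF Psi_meas2])
    show "(\<lambda>y. (y $ a, \<chi> i. y $ \<iota> i)) \<in> measurable (std_gauss_vec :: (real^'b::_) measure) (borel :: (real \<times> (real^'n)) measure)"
      by (rule meas_G) measurable
  qed
  also have "Psi x \<circ> (\<lambda>y. (y $ a, \<chi> i. y $ \<iota> i)) = Phi x"
    by (simp add: fun_eq_iff Phi_def proj_def)
  finally show ?thesis .
qed

lemma swap_meas: "swap_j j \<in> measurable (borel :: ((real^'n) \<times> (real^'n)) measure) borel"
proof -
  have eq: "swap_j j = (\<lambda>p. (vupd (fst p) j (snd p $ j), vupd (snd p) j (fst p $ j)))"
    by (simp add: fun_eq_iff swap_j_def split: prod.split)
  have "(\<lambda>p::(real^'n) \<times> (real^'n). (vupd (fst p) j (snd p $ j), vupd (snd p) j (fst p $ j))) \<in> borel_measurable (borel \<Otimes>\<^sub>M borel)"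
    unfolding vupd_def by measurable
  then show ?thesis unfolding eq by (rule meas_from_pair)
qed

lemma Phi_meas: "Phi x \<in> measurable (std_gauss_vec :: (real^'b::_) measure) borel"
proof (rule meas_G)
  have eq: "Phi x = Psi x \<circ> (\<lambda>y. (y $ a, \<chi> i. y $ \<iota> i))" by (simp add: fun_eq_iff Phi_def proj_def)
  have m1: "(\<lambda>y::real^'b::_. (y $ a, \<chi> i. y $ \<iota> i)) \<in> measurable borel (borel :: (real \<times> (real^'n)) measure)"
    by measurable
  have "Psi x \<circ> (\<lambda>y. (y $ a, \<chi> i. y $ \<iota> i)) \<in> borel_measurable borel"
    by (rule measurable_comp[OF m1 meas_from_pair[OF Psi_meas2]])
  then show "Phi x \<in> borel_measurable borel" by (simp add: eq)
qed

lemma per_x: "distr (Q' x \<bind> Pk) borel (swap_j j) = Q' x \<bind> Pk"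
proof -
  have Trm: "Tr \<in> measurable (std_gauss_vec :: (real^'b::_) measure) borel"
    by (rule meas_G) (rule linear_meas2[OF orthogonal_transformation_linear[OF Tr_orth]])
  have "distr (Q' x \<bind> Pk) borel (swap_j j) = distr (std_gauss_vec :: (real^'b::_) measure) borel (swap_j j \<circ> Phi x)"
    unfolding K_eq by (rule distr_distr[OF swap_meas Phi_meas])
  also have "swap_j j \<circ> Phi x = Phi x \<circ> Tr" by (simp add: fun_eq_iff Phi_swap)
  also have "distr (std_gauss_vec :: (real^'b::_) measure) borel (Phi x \<circ> Tr) = distr (distr std_gauss_vec borel Tr) borel (Phi x)"
  proof (rule distr_distr[symmetric])
    show "Phi x \<in> measurable (borel :: (real^'b::_) measure) borel"
      using Phi_meas by (simp add: measurable_cong_sets[OF sets_G refl])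
  qed (rule Trm)
  also have "\<dots> = Q' x \<bind> Pk" by (simp add: G_orth[OF Tr_orth] K_eq)
  finally show ?thesis .
qed

lemma main:
  assumes mu: "prob_space mu" "sets mu = sets (borel :: (real^'n) measure)"
  shows "distr ((mu \<bind> Q') \<bind> Pk) borel (swap_j j) = (mu \<bind> Q') \<bind> Pk"
proof -
  have ne: "space mu \<noteq> {}" using prob_space.not_empty[OF mu(1)] .
  have Q'm: "Q' \<in> measurable mu (subprob_algebra borel)"
    using Q'_meas by (simp add: measurable_cong_sets[OF mu(2) refl])
  have eq: "(mu \<bind> Q') \<bind> Pk = mu \<bind> (\<lambda>x. Q' x \<bind> Pk)"
    by (rule bind_assoc[OF Q'm Pk_meas])
  have km: "(\<lambda>x. Q' x \<bind> Pk) \<in> measurable mu (subprob_algebra borel)"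
    by (rule measurable_bind2[OF Q'm Pk_meas])
  have "distr (mu \<bind> (\<lambda>x. Q' x \<bind> Pk)) borel (swap_j j) = mu \<bind> (\<lambda>x. distr (Q' x \<bind> Pk) borel (swap_j j))"
    by (rule distr_bind[OF km ne swap_meas])
  also have "\<dots> = mu \<bind> (\<lambda>x. Q' x \<bind> Pk)" by (simp add: per_x)
  finally show ?thesis unfolding eq .
qed

end

theorem lemma3:
  fixes Th :: "real^'n^'n" and d :: "real^'n"
  assumes "transpose Th = Th"
    and "\<forall>i. Th $ i $ i > 0"
    and "\<forall>i. d $ i \<ge> 0"
    and "psd (2 *\<^sub>R diagm d - diagm d ** Th ** diagm d)"
  shows "\<forall>j. pairwise_exchangeable (knock_kernel Th d) (Q_cond Th j) j"
proof
  fix j :: 'n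
  define S where "S = 2 *\<^sub>R diagm d - diagm d ** Th ** diagm d"
  define A where "A = (SOME A :: real^'n^'n. A ** transpose A = S)"
  have AA: "A ** transpose A = S"
    unfolding A_def using psd_sqrt[OF assms(4)[folded S_def]] by (rule someI_ex)
  have cardle: "card (UNIV :: 'n option set) \<le> card (UNIV :: 'n bit0 set)"
  proof -
    have "0 < CARD('n)" by (rule finite_UNIV_card_ge_0) simp
    then show ?thesis by simp
  qed
  obtain f :: "'n option \<Rightarrow> 'n bit0" where f: "inj f"
    using card_le_inj[OF finite_class.finite_UNIV finite_class.finite_UNIV cardle] by auto
  define a where "a = f None"
  define \<iota> where "\<iota> = f \<circ> Some"
  have inj: "inj \<iota>" unfolding \<iota>_def using f by (intro inj_compose) (auto simp: inj_def)
  have a: "a \<notin> range \<iota>" using f by (auto simp: a_def \<iota>_def inj_def)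
  interpret K: KS2 Th d A j a \<iota>
  proof unfold_locales
    show "transpose Th = Th" by (rule assms(1))
    show "Th $ j $ j > 0" using assms(2) by simp
    show "A ** transpose A = 2 *\<^sub>R diagm d - diagm d ** Th ** diagm d" using AA by (simp add: S_def)
    show "inj \<iota>" by (rule inj)
    show "a \<notin> range \<iota>" by (rule a)
    show "A = (SOME A :: real^'n^'n. A ** transpose A = 2 *\<^sub>R diagm d - diagm d ** Th ** diagm d)"
      by (simp add: A_def S_def)
  qed
  show "pairwise_exchangeable (knock_kernel Th d) (Q_cond Th j) j"
    unfolding pairwise_exchangeable_def Let_def
  proof (intro allI impI)
    fix mu :: "(real^'n) measure"
    assume mu: "prob_space mu \<and> sets mu = sets borel"
    have e1: "complete_by mu (Q_cond Th j) j = mu \<bind> K.Q'"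
      by (simp add: complete_by_def K.Q'_def[abs_def])
    have e2: "(\<lambda>x. distr (knock_kernel Th d x) borel (\<lambda>y. (x, y))) = K.Pk"
      by (simp add: K.Pk_def[abs_def])
    show "distr (complete_by mu (Q_cond Th j) j \<bind> (\<lambda>x. distr (knock_kernel Th d x) borel (\<lambda>y. (x, y)))) borel (swap_j j) =
          complete_by mu (Q_cond Th j) j \<bind> (\<lambda>x. distr (knock_kernel Th d x) borel (\<lambda>y. (x, y)))"
      unfolding e1 e2 using K.main mu by blast
  qed
qed

end
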